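(* Let $\mathcal{L}$ be a Lindbladian on $\mathbb{C}^d$, let $(\pi_t)_{t\ge0}$ be program states on a finite-dimensional space $\mathcal{H}_P$ such that $t\mapsto\pi_t$ is real-analytic on $[0,\infty)$, and let $\mathcal{P}$ be a linear map from operators on $\mathbb{C}^d\otimes\mathcal{H}_P$ to operators on $\mathbb{C}^d$ such that $\mathcal{P}(\cdot\otimes\pi_t)=e^{t\mathcal{L}}$ for all $t\in[0,T]$, for some $T>0$. Then $\mathcal{P}(\cdot\otimes\pi_t)=e^{t\mathcal{L}}$ also holds for every $t\ge T$.
   Context: A Lindbladian has GKSL form $\mathcal{L}(\rho)=-i[H,\rho]+\sum_j\gamma_j(L_j\rho L_j^\dagger-\frac12\{L_j^\dagger L_j,\rho\})$ and generates the semigroup $(e^{t\mathcal{L}})_{t\ge0}$. *)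

theory Defs
  imports "HOL-Analysis.Analysis"
begin

type_synonym 'n op = "complex^'n^'n"

definition adj :: "'n::finite op \<Rightarrow> 'n op" where
  "adj A = (\<chi> i j. cnj (A $ j $ i))"

definition cscale :: "complex \<Rightarrow> 'n::finite op \<Rightarrow> 'n op" where
  "cscale c A = (\<chi> i j. c * A $ i $ j)"

definition hermitian :: "'n::finite op \<Rightarrow> bool" where
  "hermitian A \<longleftrightarrow> adj A = A"

definition trace_op :: "'n::finite op \<Rightarrow> complex" where
  "trace_op A = (\<Sum>i\<in>UNIV. A $ i $ i)"

definition psd :: "'n::finite op \<Rightarrow> bool" where
  "psd A \<longleftrightarrow> (\<forall>v :: complex^'n.
      Im (\<Sum>i\<in>UNIV. \<Sum>j\<in>UNIV. cnj (v $ i) * A $ i $ j * v $ j) = 0 \<and>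
      Re (\<Sum>i\<in>UNIV. \<Sum>j\<in>UNIV. cnj (v $ i) * A $ i $ j * v $ j) \<ge> 0)"

definition density_op :: "'n::finite op \<Rightarrow> bool" where
  "density_op A \<longleftrightarrow> psd A \<and> trace_op A = 1"

definition tensor_op :: "'d::finite op \<Rightarrow> 'p::finite op \<Rightarrow> ('d \<times> 'p) op" where
  "tensor_op A B = (\<chi> x y. A $ fst x $ fst y * B $ snd x $ snd y)"

definition clinear_map :: "('a::finite op \<Rightarrow> 'b::finite op) \<Rightarrow> bool" where
  "clinear_map P \<longleftrightarrow> (\<forall>A B. P (A + B) = P A + P B) \<and> (\<forall>c A. P (cscale c A) = cscale c (P A))"

definition lindbladian :: "('d::finite op \<Rightarrow> 'd op) \<Rightarrow> bool" where
  "lindbladian \<L> \<longleftrightarrow> (\<exists>(H :: 'd op) (J :: nat set) (g :: nat \<Rightarrow> real) (Ls :: nat \<Rightarrow> 'd op).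
     hermitian H \<and> finite J \<and> (\<forall>j\<in>J. g j \<ge> 0) \<and>
     (\<forall>\<rho>. \<L> \<rho> = cscale (-\<i>) (H ** \<rho> - \<rho> ** H) +
        (\<Sum>j\<in>J. cscale (complex_of_real (g j))
            (Ls j ** \<rho> ** adj (Ls j)
             - cscale (1/2) (adj (Ls j) ** Ls j ** \<rho> + \<rho> ** (adj (Ls j) ** Ls j))))))"

definition lind_exp :: "('d::finite op \<Rightarrow> 'd op) \<Rightarrow> real \<Rightarrow> 'd op \<Rightarrow> 'd op" where
  "lind_exp \<L> t \<rho> = (\<Sum>n. (t ^ n / fact n) *\<^sub>R (\<L> ^^ n) \<rho>)"

definition real_analytic_on :: "(real \<Rightarrow> 'a::real_normed_vector) \<Rightarrow> real set \<Rightarrow> bool" where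
  "real_analytic_on f S \<longleftrightarrow> (\<forall>x\<in>S. \<exists>r>0. \<exists>c :: nat \<Rightarrow> 'a.
      \<forall>y\<in>S. \<bar>y - x\<bar> < r \<longrightarrow> (\<lambda>n. (y - x) ^ n *\<^sub>R c n) sums f y)"

end

theory Submission
  imports Defs "HOL-Complex_Analysis.Cauchy_Integral_Formula"
begin

no_notation fps_nth (infixl \<open>$\<close> 75)

lemma sc_nth[simp]: "(a *\<^sub>R (A::'n::finite op)) $ i $ j = complex_of_real a * A $ i $ j"
  unfolding vector_scaleR_component by (simp add: scaleR_conv_of_real)

lemma mm_add_l: "((A::'n::finite op) + B) ** C = A ** C + B ** C"
  by (simp add: vec_eq_iff matrix_matrix_mult_def sum.distrib distrib_right)
lemma mm_add_r: "(A::'n::finite op) ** (B + C) = A ** B + A ** C"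
  by (simp add: vec_eq_iff matrix_matrix_mult_def sum.distrib distrib_left)
lemma mm_scale_l: "((a *\<^sub>R A)::'n::finite op) ** C = a *\<^sub>R (A ** C)"
  by (simp add: vec_eq_iff matrix_matrix_mult_def scaleR_sum_right algebra_simps)
lemma mm_scale_r: "(A::'n::finite op) ** (a *\<^sub>R C) = a *\<^sub>R (A ** C)"
  by (simp add: vec_eq_iff matrix_matrix_mult_def scaleR_sum_right algebra_simps)
lemma mm_diff_l: "((A::'n::finite op) - B) ** C = A ** C - B ** C"
  by (simp add: vec_eq_iff matrix_matrix_mult_def sum_subtractf left_diff_distrib)
lemma mm_diff_r: "(A::'n::finite op) ** (B - C) = A ** B - A ** C"
  by (simp add: vec_eq_iff matrix_matrix_mult_def sum_subtractf right_diff_distrib)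
lemma cscale_add: "cscale c ((A::'n::finite op) + B) = cscale c A + cscale c B"
  by (simp add: vec_eq_iff cscale_def distrib_left)
lemma cscale_diff: "cscale c ((A::'n::finite op) - B) = cscale c A - cscale c B"
  by (simp add: vec_eq_iff cscale_def right_diff_distrib)
lemma cscale_scale: "cscale c (a *\<^sub>R (A::'n::finite op)) = a *\<^sub>R cscale c A"
  by (simp add: vec_eq_iff cscale_def algebra_simps del: vector_scaleR_component)
lemma cscale_of_real: "cscale (complex_of_real a) (A::'n::finite op) = a *\<^sub>R A"
  by (simp add: vec_eq_iff cscale_def del: vector_scaleR_component)

lemma lind_linear:
  assumes "lindbladian (\<L> :: 'd::finite op \<Rightarrow> 'd op)"
  shows "linear \<L>"
proof -
  obtain H J g Ls where "\<forall>\<rho>. \<L> \<rho> = cscale (-\<i>) (H ** \<rho> - \<rho> ** H) +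
        (\<Sum>j\<in>(J::nat set). cscale (complex_of_real (g j))
            (Ls j ** \<rho> ** adj (Ls j)
             - cscale (1/2) (adj (Ls j) ** Ls j ** \<rho> + \<rho> ** (adj (Ls j) ** Ls j))))"
    using assms unfolding lindbladian_def by blast
  note eq = spec[OF this]
  show ?thesis
  proof (rule linearI)
    fix a b
    show "\<L> (a + b) = \<L> a + \<L> b"
      unfolding eq by (simp add: mm_add_l mm_add_r cscale_add cscale_diff algebra_simps flip: sum.distrib)
  next
    fix r b
    show "\<L> (r *\<^sub>R b) = r *\<^sub>R \<L> b"
      unfolding eq by (simp add: mm_scale_l mm_scale_r cscale_scale cscale_add cscale_diff scaleR_sum_right
          scaleR_diff_right scaleR_add_right)
  qed
qed

lemma ps_zero:
  fixes c :: "nat \<Rightarrow> complex"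
  assumes s: "s > 0" and h: "\<forall>z\<in>{-s<..<0}. (\<lambda>n. c n * complex_of_real z ^ n) sums 0"
  shows "c 0 = 0"
proof -
  define K where "K = complex_of_real (-s/2)"
  have "-s/2 \<in> {-s<..<0}" using s by auto
  hence "(\<lambda>n. c n * K ^ n) sums 0" unfolding K_def using h by blast
  hence sK: "summable (\<lambda>n. c n * K ^ n)" by (rule sums_summable)
  define F where "F x = (\<Sum>n. c n * x ^ n)" for x
  have "isCont F 0" unfolding F_def
    by (rule isCont_powser[OF sK]) (use s in \<open>simp add: K_def\<close>)
  moreover have c1: "isCont (of_real :: real \<Rightarrow> complex) 0"
    by (rule bounded_linear.isCont[OF bounded_linear_of_real]) (rule continuous_ident)
  ultimately have "isCont (\<lambda>x. F (complex_of_real x)) 0"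
    using isCont_o2[OF c1, of F] by simp
  hence lim: "((\<lambda>x. F (complex_of_real x)) \<longlongrightarrow> F 0) (at_left 0)"
    unfolding isCont_def by (simp add: filterlim_at_split)
  have "eventually (\<lambda>x. x \<in> {-s<..<0}) (at_left (0::real))"
    by (rule eventually_at_left_real) (use s in simp)
  hence "eventually (\<lambda>x. F (complex_of_real x) = 0) (at_left (0::real))"
    by eventually_elim (use h in \<open>auto simp: F_def sums_iff\<close>)
  hence lim0: "((\<lambda>x. F (complex_of_real x)) \<longlongrightarrow> 0) (at_left 0)"
    by (rule tendsto_eventually)
  have "F 0 = 0" using tendsto_unique[OF _ lim lim0] by simp
  thus ?thesis unfolding F_def by simp
qed

lemma ps_unique:
  fixes c :: "nat \<Rightarrow> complex"
  shows "s > 0 \<Longrightarrow> \<forall>z\<in>{-s<..<0}. (\<lambda>n. c n * complex_of_real z ^ n) sums 0 \<Longrightarrow> c k = 0"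
proof (induction k arbitrary: c)
  case 0
  then show ?case using ps_zero by blast
next
  case (Suc k)
  have c0: "c 0 = 0" using ps_zero Suc.prems by blast
  have "\<forall>z\<in>{-s<..<0}. (\<lambda>n. c (Suc n) * complex_of_real z ^ n) sums 0"
  proof
    fix z assume z: "z \<in> {-s<..<0}"
    have "(\<lambda>n. c n * complex_of_real z ^ n) sums (0 + c 0 * complex_of_real z ^ 0)"
      using Suc.prems z c0 by simp
    hence "(\<lambda>n. c (Suc n) * complex_of_real z ^ (Suc n)) sums 0"
      by (subst sums_Suc_iff) simp
    hence "(\<lambda>n. c (Suc n) * complex_of_real z ^ (Suc n) * inverse (complex_of_real z)) sums (0 * inverse (complex_of_real z))"
      by (rule sums_mult2)
    moreover have "\<And>n. c (Suc n) * complex_of_real z ^ (Suc n) * inverse (complex_of_real z) = c (Suc n) * complex_of_real z ^ n"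
      using z by (simp add: field_simps)
    ultimately show "(\<lambda>n. c (Suc n) * complex_of_real z ^ n) sums 0" by (simp only: mult_zero_left)
  qed
  from Suc.IH[OF Suc.prems(1) this] show ?case .
qed

lemma identity_thm:
  fixes h :: "real \<Rightarrow> complex"
  assumes ra: "\<forall>x\<ge>0. \<exists>r>0. \<exists>c. \<forall>y\<ge>0. \<bar>y - x\<bar> < r \<longrightarrow> (\<lambda>n. c n * complex_of_real (y - x) ^ n) sums h y"
    and T: "T > 0" and z: "\<forall>t\<in>{0..T}. h t = 0"
  shows "\<forall>t\<ge>0. h t = 0"
proof (rule ccontr)
  assume "\<not> ?thesis"
  then obtain t0 where t0: "t0 \<ge> 0" "h t0 \<noteq> 0" by auto
  define A where "A = {s. s \<ge> 0 \<and> (\<forall>t\<in>{0..s}. h t = 0)}"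
  have TA: "T \<in> A" unfolding A_def using T z by auto
  have bd: "\<forall>s\<in>A. s \<le> t0"
  proof
    fix s assume "s \<in> A"
    show "s \<le> t0"
    proof (rule ccontr)
      assume "\<not> s \<le> t0"
      hence "t0 \<in> {0..s}" using t0 by auto
      thus False using \<open>s \<in> A\<close> t0 unfolding A_def by auto
    qed
  qed
  have ne: "A \<noteq> {}" using TA by auto
  have bdd: "bdd_above A" using bd by (auto intro: bdd_aboveI)
  define S where "S = Sup A"
  have ST: "T \<le> S" unfolding S_def using TA bdd by (rule cSup_upper)
  have below: "h t = 0" if "0 \<le> t" "t < S" for t
  proof -
    obtain s where "s \<in> A" "t < s" using \<open>t < S\<close> less_cSup_iff[OF ne bdd] unfolding S_def by auto
    thus ?thesis using that unfolding A_def by auto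
  qed
  obtain r c where r: "r > 0" and rc: "\<forall>y\<ge>0. \<bar>y - S\<bar> < r \<longrightarrow> (\<lambda>n. c n * complex_of_real (y - S) ^ n) sums h y"
    using ra ST T by (meson less_le_trans less_imp_le)
  define s where "s = min r S"
  have s0: "s > 0" unfolding s_def using r ST T by auto
  have "\<forall>z\<in>{-s<..<0}. (\<lambda>n. c n * complex_of_real z ^ n) sums 0"
  proof
    fix z assume zs: "z \<in> {-s<..<0}"
    have "S + z \<ge> 0" "\<bar>(S + z) - S\<bar> < r" using zs unfolding s_def by auto
    hence "(\<lambda>n. c n * complex_of_real ((S + z) - S) ^ n) sums h (S + z)"
      using rc by blast
    moreover have "h (S + z) = 0" using below zs unfolding s_def by auto
    ultimately show "(\<lambda>n. c n * complex_of_real z ^ n) sums 0" by (metis add_diff_cancel_left')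
  qed
  hence c0: "\<And>n. c n = 0" using ps_unique[OF s0] by blast
  have above: "h y = 0" if "S \<le> y" "y < S + r" for y
  proof -
    have "(\<lambda>n. c n * complex_of_real (y - S) ^ n) sums h y" using rc that ST T by auto
    thus ?thesis using c0 sums_unique2[of "\<lambda>n. 0" "h y" 0] by auto
  qed
  have "S + r/2 \<in> A" unfolding A_def
  proof safe
    show "0 \<le> S + r/2" using ST T r by auto
  next
    fix t assume "t \<in> {0..S + r/2}"
    thus "h t = 0" using below above r by (cases "t < S") auto
  qed
  hence "S + r/2 \<le> S" unfolding S_def using bdd by (rule cSup_upper)
  thus False using r by auto
qed

lemma tensor_add: "tensor_op \<rho> (B1 + B2) = tensor_op \<rho> B1 + tensor_op \<rho> B2"
  by (simp add: vec_eq_iff tensor_op_def distrib_left)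
lemma tensor_scale: "tensor_op \<rho> (a *\<^sub>R B) = a *\<^sub>R tensor_op \<rho> B"
  by (simp add: vec_eq_iff tensor_op_def del: vector_scaleR_component)

lemma Q_linear:
  assumes "clinear_map P"
  shows "linear (\<lambda>B. P (tensor_op \<rho> B) $ i $ j)"
proof (rule linearI)
  fix b1 b2 show "P (tensor_op \<rho> (b1 + b2)) $ i $ j = P (tensor_op \<rho> b1) $ i $ j + P (tensor_op \<rho> b2) $ i $ j"
    using assms by (simp add: tensor_add clinear_map_def)
next
  fix r b
  have "P (tensor_op \<rho> (r *\<^sub>R b)) = r *\<^sub>R P (tensor_op \<rho> b)"
    using assms unfolding tensor_scale clinear_map_def by (metis cscale_of_real)
  thus "P (tensor_op \<rho> (r *\<^sub>R b)) $ i $ j = r *\<^sub>R P (tensor_op \<rho> b) $ i $ j" by simp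
qed

lemma G_analytic:
  fixes \<pi> :: "real \<Rightarrow> 'p::finite op" and P :: "('d::finite \<times> 'p) op \<Rightarrow> 'd op"
  assumes "clinear_map P" and "real_analytic_on \<pi> {0..}" and "x \<ge> 0"
  shows "\<exists>r>0. \<exists>c. \<forall>y\<ge>0. \<bar>y - x\<bar> < r \<longrightarrow>
     (\<lambda>n. c n * complex_of_real (y - x) ^ n) sums (P (tensor_op \<rho> (\<pi> y)) $ i $ j)"
proof -
  let ?Q = "\<lambda>B. P (tensor_op \<rho> B) $ i $ j"
  have lin: "linear ?Q" by (rule Q_linear[OF assms(1)])
  hence bl: "bounded_linear ?Q" by (simp add: linear_conv_bounded_linear)
  obtain r c where r: "r > 0" and rc: "\<forall>y\<in>{0..}. \<bar>y - x\<bar> < r \<longrightarrow> (\<lambda>n. (y - x) ^ n *\<^sub>R c n) sums \<pi> y"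
    using bspec[OF assms(2)[unfolded real_analytic_on_def], of x] assms(3) by auto
  show ?thesis
  proof (intro exI conjI allI impI)
    show "r > 0" by fact
    fix y :: real assume y: "y \<ge> 0" "\<bar>y - x\<bar> < r"
    have "(\<lambda>n. ?Q ((y - x) ^ n *\<^sub>R c n)) sums ?Q (\<pi> y)"
      using bounded_linear.sums[OF bl] rc y by auto
    moreover have "?Q ((y - x) ^ n *\<^sub>R c n) = ?Q (c n) * complex_of_real (y - x) ^ n" for n
    proof -
      have "?Q ((y - x) ^ n *\<^sub>R c n) = (y - x) ^ n *\<^sub>R ?Q (c n)" by (rule linear_scale[OF lin])
      also have "\<dots> = ?Q (c n) * complex_of_real (y - x) ^ n" by (simp add: scaleR_conv_of_real mult.commute)
      finally show ?thesis .
    qed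
    ultimately show "(\<lambda>n. ?Q (c n) * complex_of_real (y - x) ^ n) sums ?Q (\<pi> y)" by simp
  qed
qed

lemma pow_bound:
  fixes L :: "'a::real_normed_vector \<Rightarrow> 'a"
  assumes "\<And>x. norm (L x) \<le> norm x * K" "K \<ge> 0"
  shows "norm ((L ^^ n) \<rho>) \<le> K ^ n * norm \<rho>"
proof (induction n)
  case 0 then show ?case by simp
next
  case (Suc n)
  have "norm ((L ^^ Suc n) \<rho>) \<le> norm ((L ^^ n) \<rho>) * K" using assms(1) by simp
  also have "\<dots> \<le> K ^ n * norm \<rho> * K" using Suc assms(2) by (rule mult_right_mono)
  finally show ?case by (simp add: algebra_simps)
qed

lemma exp_analytic:
  fixes L :: "'d::finite op \<Rightarrow> 'd op"
  assumes lin: "linear L"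
  shows "\<exists>d. \<forall>y. (\<lambda>n. d n * complex_of_real (y - x) ^ n) sums (lind_exp L y \<rho> $ i $ j)"
proof -
  have bl: "bounded_linear L" using lin by (simp add: linear_conv_bounded_linear)
  obtain K where K: "K > 0" "\<And>x. norm (L x) \<le> norm x * K"
    using bounded_linear.pos_bounded[OF bl] by blast
  have pb: "norm ((L ^^ n) \<rho>) \<le> K ^ n * norm \<rho>" for n
    by (rule pow_bound) (use K in auto)
  have nij: "norm (X $ i $ j) \<le> norm X" for X :: "'d op"
    by (meson order_trans Finite_Cartesian_Product.norm_nth_le)
  define a where "a n = (L ^^ n) \<rho> $ i $ j / fact n" for n
  have sa: "summable (\<lambda>n. a n * z ^ n)" for z :: complex
  proof (rule summable_comparison_test')
    show "summable (\<lambda>n. norm \<rho> * (inverse (fact n) * (K * norm z) ^ n))"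
      by (rule summable_mult) (rule summable_exp)
    fix n :: nat
    have "norm (a n * z ^ n) = norm ((L ^^ n) \<rho> $ i $ j) / fact n * norm z ^ n"
      by (simp add: a_def norm_mult norm_divide norm_power)
    also have "\<dots> \<le> (K ^ n * norm \<rho>) / fact n * norm z ^ n"
      by (intro mult_right_mono divide_right_mono order_trans[OF nij pb]) auto
    also have "\<dots> = norm \<rho> * (inverse (fact n) * (K * norm z) ^ n)"
      by (simp add: field_simps power_mult_distrib)
    finally show "norm (a n * z ^ n) \<le> norm \<rho> * (inverse (fact n) * (K * norm z) ^ n)" .
  qed
  have sv: "summable (\<lambda>n. (t ^ n / fact n) *\<^sub>R (L ^^ n) \<rho>)" for t :: real
  proof (rule summable_comparison_test')
    show "summable (\<lambda>n. norm \<rho> * (inverse (fact n) * (K * \<bar>t\<bar>) ^ n))"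
      by (rule summable_mult) (rule summable_exp)
    fix n :: nat
    have "norm ((t ^ n / fact n) *\<^sub>R (L ^^ n) \<rho>) = \<bar>t\<bar> ^ n / fact n * norm ((L ^^ n) \<rho>)"
      by (simp add: power_abs)
    also have "\<dots> \<le> \<bar>t\<bar> ^ n / fact n * (K ^ n * norm \<rho>)"
      by (intro mult_left_mono pb) auto
    also have "\<dots> = norm \<rho> * (inverse (fact n) * (K * \<bar>t\<bar>) ^ n)"
      by (simp add: field_simps power_mult_distrib)
    finally show "norm ((t ^ n / fact n) *\<^sub>R (L ^^ n) \<rho>) \<le> norm \<rho> * (inverse (fact n) * (K * \<bar>t\<bar>) ^ n)" .
  qed
  have blij: "bounded_linear (\<lambda>X :: 'd op. X $ i $ j)"
    using bounded_linear_compose[where f="\<lambda>x. x $ j" and g="\<lambda>X. X $ i", OF bounded_linear_vec_nth bounded_linear_vec_nth] by simp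
  have le: "lind_exp L t \<rho> $ i $ j = (\<Sum>n. a n * complex_of_real t ^ n)" for t
  proof -
    have "(\<lambda>n. ((t ^ n / fact n) *\<^sub>R (L ^^ n) \<rho>) $ i $ j) sums (lind_exp L t \<rho> $ i $ j)"
      unfolding lind_exp_def by (rule bounded_linear.sums[OF blij summable_sums[OF sv]])
    moreover have "((t ^ n / fact n) *\<^sub>R (L ^^ n) \<rho>) $ i $ j = a n * complex_of_real t ^ n" for n
      unfolding sc_nth by (simp add: a_def field_simps)
    ultimately show ?thesis by (simp add: sums_iff)
  qed
  define F where "F z = (\<Sum>n. a n * z ^ n)" for z
  have hol: "F holomorphic_on UNIV"
    unfolding holomorphic_on_def field_differentiable_def F_def
    using termdiffs_strong_converges_everywhere[OF sa] has_field_derivative_at_within by blast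
  show ?thesis
  proof (intro exI allI)
    fix y :: real
    have "complex_of_real y \<in> ball (complex_of_real x) (\<bar>y - x\<bar> + 1)"
      by (simp add: dist_norm flip: of_real_diff)
    from holomorphic_power_series[OF holomorphic_on_subset[OF hol] this]
    have "(\<lambda>n. (deriv ^^ n) F (complex_of_real x) / fact n * (complex_of_real y - complex_of_real x) ^ n) sums F (complex_of_real y)"
      by simp
    thus "(\<lambda>n. (deriv ^^ n) F (complex_of_real x) / fact n * complex_of_real (y - x) ^ n) sums (lind_exp L y \<rho> $ i $ j)"
      by (simp add: le F_def)
  qed
qed

theorem lemma14:
  fixes \<L> :: "'d::finite op \<Rightarrow> 'd op"
    and \<pi> :: "real \<Rightarrow> 'p::finite op"
    and P :: "('d \<times> 'p) op \<Rightarrow> 'd op"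
    and T :: real
  assumes "lindbladian \<L>"
    and "\<forall>t\<ge>0. density_op (\<pi> t)"
    and "real_analytic_on \<pi> {0..}"
    and "clinear_map P"
    and "T > 0"
    and "\<forall>t\<in>{0..T}. \<forall>\<rho>. P (tensor_op \<rho> (\<pi> t)) = lind_exp \<L> t \<rho>"
  shows "\<forall>t\<ge>T. \<forall>\<rho>. P (tensor_op \<rho> (\<pi> t)) = lind_exp \<L> t \<rho>"
proof (intro allI impI)
  fix t :: real and \<rho> :: "'d op"
  assume tT: "t \<ge> T"
  have lin: "linear \<L>" by (rule lind_linear[OF assms(1)])
  have "P (tensor_op \<rho> (\<pi> t)) $ i $ j = lind_exp \<L> t \<rho> $ i $ j" for i j
  proof -
    define h where "h s = P (tensor_op \<rho> (\<pi> s)) $ i $ j - lind_exp \<L> s \<rho> $ i $ j" for s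
    have ra: "\<forall>x\<ge>0. \<exists>r>0. \<exists>c. \<forall>y\<ge>0. \<bar>y - x\<bar> < r \<longrightarrow> (\<lambda>n. c n * complex_of_real (y - x) ^ n) sums h y"
    proof (intro allI impI)
      fix x :: real assume x: "x \<ge> 0"
      obtain r c where r: "r > 0" and rc: "\<forall>y\<ge>0. \<bar>y - x\<bar> < r \<longrightarrow>
         (\<lambda>n. c n * complex_of_real (y - x) ^ n) sums (P (tensor_op \<rho> (\<pi> y)) $ i $ j)"
        using G_analytic[OF assms(4) assms(3) x, of \<rho> i j] by blast
      obtain d where d: "\<forall>y. (\<lambda>n. d n * complex_of_real (y - x) ^ n) sums (lind_exp \<L> y \<rho> $ i $ j)"
        using exp_analytic[OF lin, of x \<rho> i j] by blast
      show "\<exists>r>0. \<exists>c. \<forall>y\<ge>0. \<bar>y - x\<bar> < r \<longrightarrow> (\<lambda>n. c n * complex_of_real (y - x) ^ n) sums h y"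
      proof (intro exI conjI allI impI)
        show "r > 0" by fact
        fix y :: real assume y: "y \<ge> 0" "\<bar>y - x\<bar> < r"
        have "(\<lambda>n. c n * complex_of_real (y - x) ^ n - d n * complex_of_real (y - x) ^ n) sums h y"
          unfolding h_def using sums_diff rc d y by blast
        thus "(\<lambda>n. (c n - d n) * complex_of_real (y - x) ^ n) sums h y"
          by (simp add: left_diff_distrib)
      qed
    qed
    have z: "\<forall>s\<in>{0..T}. h s = 0" using assms(6) unfolding h_def by simp
    have "h t = 0" using identity_thm[OF ra assms(5) z] tT assms(5) by auto
    thus ?thesis unfolding h_def by simp
  qed
  thus "P (tensor_op \<rho> (\<pi> t)) = lind_exp \<L> t \<rho>" by (simp add: vec_eq_iff)
qed

end
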